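(* Consider noiseless non-adaptive sensing $\bm{y} = \bm{A}\bm{x}$, where $\bm{x} \in \mathbb{R}^N$ is an arbitrary one-sparse signal whose single nonzero entry equals $\mu \neq 0$, and $\bm{A}$ is a binary ($\{0,1\}$-valued) $M \times N$ sensing matrix with $M = T\log_2(N)$ measurements, where $T \geq 1$ is a constant. Then any such binary sensing matrix $\bm{A}$ from which every such one-sparse $\bm{x}$ can be reconstructed from $\bm{y} = \bm{A}\bm{x}$ has $l_0$ cost $\|\bm{A}\|_{0,0} = \Theta(N\log_2(N))$ as $N \to \infty$.
   Context: For an $M\times N$ matrix $\bm{A} = [A_1 \cdots A_N]$ with columns $A_i$, the $l_0$ cost is $\|\bm{A}\|_{0,0} = \sum_{i=1}^N \|A_i\|_0 = \sum_{i=1}^N\sum_{j=1}^M \mathbb{I}(A(j,i)\neq 0)$, the number of nonzero entries. A signal is one-sparse if it has at most one nonzero entry. A non-adaptive strategy acquires all $M$ measurements at once with a fixed matrix $\bm{A}$ not chosen based on previous observations. $F(N) = \Theta(g(N))$ means there are positive constants $C_1, C_2$ with $C_1 g(N) \leq F(N) \leq C_2 g(N)$ for all sufficiently large $N$. *)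

theory Defs
  imports Complex_Main
begin

text \<open>An M x N matrix is represented as a function A :: nat => nat => real,
  A j i being the entry in row j < M and column i < N (other values irrelevant).
  Signals in R^N are functions x :: nat => real, entries with index >= N zero.\<close>

definition binary_matrix :: "nat \<Rightarrow> nat \<Rightarrow> (nat \<Rightarrow> nat \<Rightarrow> real) \<Rightarrow> bool" where
  "binary_matrix M N A \<longleftrightarrow> (\<forall>j<M. \<forall>i<N. A j i \<in> {0, 1})"

definition mat_vec :: "nat \<Rightarrow> (nat \<Rightarrow> nat \<Rightarrow> real) \<Rightarrow> (nat \<Rightarrow> real) \<Rightarrow> nat \<Rightarrow> real" where
  "mat_vec N A x j = (\<Sum>i<N. A j i * x i)"

definition l00_cost :: "nat \<Rightarrow> nat \<Rightarrow> (nat \<Rightarrow> nat \<Rightarrow> real) \<Rightarrow> nat" where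
  "l00_cost M N A = (\<Sum>i<N. card {j. j < M \<and> A j i \<noteq> 0})"

definition one_sparse_mu :: "nat \<Rightarrow> real \<Rightarrow> (nat \<Rightarrow> real) set" where
  "one_sparse_mu N \<mu> = {x. \<exists>k<N. x k = \<mu> \<and> (\<forall>i. i \<noteq> k \<longrightarrow> x i = 0)}"

definition recovers :: "nat \<Rightarrow> nat \<Rightarrow> real \<Rightarrow> (nat \<Rightarrow> nat \<Rightarrow> real) \<Rightarrow> bool" where
  "recovers M N \<mu> A \<longleftrightarrow>
     (\<forall>x\<in>one_sparse_mu N \<mu>. \<forall>x'\<in>one_sparse_mu N \<mu>.
        (\<forall>j<M. mat_vec N A x j = mat_vec N A x' j) \<longrightarrow> x = x')"

definition num_meas :: "real \<Rightarrow> nat \<Rightarrow> nat" where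
  "num_meas T N = nat \<lceil>T * log 2 (real N)\<rceil>"

end

theory Submission
  imports Defs
begin

lemma tangent_sum:
  fixes w :: "nat \<Rightarrow> real" and x :: real
  assumes "0 < x" "N > 0"
  shows "real N * x powr ((\<Sum>i<N. w i) / N) \<le> (\<Sum>i<N. x powr w i)"
proof -
  define a where "a = (\<Sum>i<N. w i) / N"
  have t: "x powr a * (1 + (w i - a) * ln x) \<le> x powr w i" for i
  proof -
    have "x powr w i = exp (a * ln x) * exp ((w i - a) * ln x)"
      using assms by (simp add: powr_def exp_add[symmetric] algebra_simps)
    also have "\<dots> \<ge> exp (a * ln x) * (1 + (w i - a) * ln x)"
      by (intro mult_left_mono) auto
    finally show ?thesis using assms by (simp add: powr_def)
  qed
  have "(\<Sum>i<N. x powr a * (1 + (w i - a) * ln x)) = x powr a * (N + ln x * ((\<Sum>i<N. w i) - N * a))"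
    by (simp add: sum_distrib_left sum.distrib algebra_simps sum_subtractf)
  also have "\<dots> = x powr a * N" using assms by (simp add: a_def)
  moreover have "(\<Sum>i<N. x powr a * (1 + (w i - a) * ln x)) \<le> (\<Sum>i<N. x powr w i)"
    by (rule sum_mono) (rule t)
  ultimately have "x powr a * N \<le> (\<Sum>i<N. x powr w i)" by simp
  thus ?thesis by (simp add: a_def mult.commute)
qed

lemma pow_sum:
  fixes x :: real
  assumes "finite A"
  shows "(\<Sum>S\<in>Pow A. x ^ card S) = (1 + x) ^ card A"
  using assms
proof (induction A rule: finite_induct)
  case empty then show ?case by simp
next
  case (insert a A)
  have disj: "Pow A \<inter> insert a ` Pow A = {}" using insert by auto
  have inj: "inj_on (insert a) (Pow A)" using insert
    by (smt (verit, ccfv_threshold) Pow_iff inj_on_def insert_absorb insert_ident subset_iff)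
  have fin: "finite (Pow A)" "finite (insert a ` Pow A)" using insert by auto
  have "(\<Sum>S\<in>Pow (insert a A). x ^ card S) = (\<Sum>S\<in>Pow A. x ^ card S) + (\<Sum>S\<in>insert a ` Pow A. x ^ card S)"
    unfolding Pow_insert by (rule sum.union_disjoint[OF fin disj])
  also have "(\<Sum>S\<in>insert a ` Pow A. x ^ card S) = (\<Sum>S\<in>Pow A. x ^ card (insert a S))"
    by (rule sum.reindex[OF inj, unfolded comp_def])
  also have "\<dots> = (\<Sum>S\<in>Pow A. x * x ^ card S)"
  proof (rule sum.cong)
    fix S assume "S \<in> Pow A"
    then have "finite S" "a \<notin> S" using insert finite_subset by auto
    then show "x ^ card (insert a S) = x * x ^ card S" by simp
  qed simp
  finally show ?case using insert by (simp add: sum_distrib_left[symmetric] algebra_simps)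
qed

theorem theorem1:
  fixes T \<mu> :: real
  assumes "T \<ge> 1" and "\<mu> \<noteq> 0"
  shows "\<exists>C1>0. \<exists>C2>0. \<exists>N0::nat. \<forall>N\<ge>N0. \<forall>A.
           binary_matrix (num_meas T N) N A \<and> recovers (num_meas T N) N \<mu> A \<longrightarrow>
             C1 * real N * log 2 (real N) \<le> real (l00_cost (num_meas T N) N A) \<and>
             real (l00_cost (num_meas T N) N A) \<le> C2 * real N * log 2 (real N)"
proof -
  define x where "x = ln 2 / (2*T)"
  define L where "L = - ln x"
  have T0: "T > 0" using assms by simp
  have ln2: "0 < ln (2::real)" "ln (2::real) < 1" using ln_2_less_1 by auto
  have x0: "0 < x" using T0 ln2 by (simp add: x_def)
  have x1: "x < 1" using ln2 assms by (simp add: x_def field_simps)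
  have L0: "L > 0" using x0 x1 by (simp add: L_def)
  have main: "\<forall>N\<ge>81. \<forall>A.
           binary_matrix (num_meas T N) N A \<and> recovers (num_meas T N) N \<mu> A \<longrightarrow>
             ln 2 / (4*L) * real N * log 2 (real N) \<le> real (l00_cost (num_meas T N) N A) \<and>
             real (l00_cost (num_meas T N) N A) \<le> (2*T) * real N * log 2 (real N)"
  proof (intro allI impI)
    fix N :: nat and A
    assume N: "N \<ge> 81" and hA: "binary_matrix (num_meas T N) N A \<and> recovers (num_meas T N) N \<mu> A"
    define M where "M = num_meas T N"
    have bin: "binary_matrix M N A" and rec: "recovers M N \<mu> A" using hA by (auto simp: M_def)
    have N0: "real N > 0" using N by simp
    have e4: "exp (4::real) \<le> 81"
    proof -
      have "exp (4::real) = exp 1 ^ 4" using exp_of_nat_mult[of 4 "1::real"] by simp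
      also have "\<dots> \<le> 3 ^ 4" by (rule power_mono) (use exp_le in auto)
      finally show ?thesis by simp
    qed
    have lnN: "ln (real N) \<ge> 4"
    proof -
      have "exp 4 \<le> real N" using e4 N by linarith
      hence "ln (exp 4) \<le> ln (real N)" using N by (subst ln_le_cancel_iff) auto
      thus ?thesis by simp
    qed
    have log2: "log 2 (real N) = ln (real N) / ln 2" by (simp add: log_def)
    have log2ge: "log 2 (real N) \<ge> 1"
    proof -
      have "ln (real N) * ln 2 \<le> ln (real N) * 1" using lnN ln2 by (intro mult_left_mono) auto
      hence "ln (real N) \<le> ln (real N) / ln 2" using ln2 by (simp add: le_divide_eq)
      thus ?thesis using log2 lnN by linarith
    qed
    have Mle: "real M \<le> T * log 2 (real N) + 1"
    proof -
      have nn: "T * log 2 (real N) \<ge> 0" using T0 log2ge by simp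
      have "real M = of_int \<lceil>T * log 2 (real N)\<rceil>" using nn by (simp add: M_def num_meas_def)
      also have "\<dots> \<le> T * log 2 (real N) + 1" by (rule of_int_ceiling_le_add_one)
      finally show ?thesis .
    qed
    define S where "S i = {j. j < M \<and> A j i \<noteq> 0}" for i
    have l00: "l00_cost M N A = (\<Sum>i<N. card (S i))" by (simp add: l00_cost_def S_def)
    have cardS: "card (S i) \<le> M" for i
    proof -
      have "card (S i) \<le> card {..<M}" by (rule card_mono) (auto simp: S_def)
      thus ?thesis by simp
    qed
    have up: "real (l00_cost M N A) \<le> (2*T) * real N * log 2 (real N)"
    proof -
      have "l00_cost M N A \<le> N * M" unfolding l00
        using sum_mono[of "{..<N}" "\<lambda>i. card (S i)" "\<lambda>i. M"] cardS by simp
      hence "real (l00_cost M N A) \<le> real N * real M" by (metis of_nat_le_iff of_nat_mult)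
      also have "\<dots> \<le> real N * (T * log 2 (real N) + 1)" using Mle N0 by simp
      also have "\<dots> \<le> real N * (2 * T * log 2 (real N))"
      proof -
        have "1 \<le> T * log 2 (real N)" using assms log2ge
          by (metis mult_mono' mult_1 order_trans zero_le_one)
        thus ?thesis using N0 by simp
      qed
      finally show ?thesis by (simp add: algebra_simps)
    qed
    define e where "e k = (\<lambda>i::nat. if i = k then \<mu> else (0::real))" for k
    have e_in: "k < N \<Longrightarrow> e k \<in> one_sparse_mu N \<mu>" for k
      by (auto simp: e_def one_sparse_mu_def)
    have e_mv: "k < N \<Longrightarrow> mat_vec N A (e k) j = A j k * \<mu>" for k j
    proof -
      assume k: "k < N"
      have "mat_vec N A (e k) j = (\<Sum>i<N. if i = k then A j k * \<mu> else 0)"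
        unfolding mat_vec_def by (rule sum.cong) (auto simp: e_def)
      thus ?thesis using k by simp
    qed
    have inj: "inj_on S {..<N}"
    proof (rule inj_onI)
      fix k l assume k: "k \<in> {..<N}" and l: "l \<in> {..<N}" and eq: "S k = S l"
      have "\<forall>j<M. A j k = A j l"
      proof (intro allI impI)
        fix j assume j: "j < M"
        have "A j k \<in> {0,1}" "A j l \<in> {0,1}" using bin j k l by (auto simp: binary_matrix_def)
        moreover have "A j k \<noteq> 0 \<longleftrightarrow> A j l \<noteq> 0" using eq j by (auto simp: S_def set_eq_iff)
        ultimately show "A j k = A j l" by auto
      qed
      hence "\<forall>j<M. mat_vec N A (e k) j = mat_vec N A (e l) j" using k l e_mv by simp
      hence "e k = e l" using rec e_in k l by (auto simp: recovers_def)
      hence "e k k = e l k" by simp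
      thus "k = l" using assms(2) by (auto simp: e_def split: if_splits)
    qed
    have sumbound: "(\<Sum>i<N. x ^ card (S i)) \<le> (1 + x) ^ M"
    proof -
      have "(\<Sum>i<N. x ^ card (S i)) = (\<Sum>U\<in>S ` {..<N}. x ^ card U)"
        by (simp add: sum.reindex[OF inj])
      also have "\<dots> \<le> (\<Sum>U\<in>Pow {..<M}. x ^ card U)"
        by (rule sum_mono2) (use x0 in \<open>auto simp: S_def\<close>)
      also have "\<dots> = (1 + x) ^ M" using pow_sum[of "{..<M}" x] by simp
      finally show ?thesis .
    qed
    define W where "W = real (l00_cost M N A)"
    have W: "W = (\<Sum>i<N. real (card (S i)))" by (simp add: W_def l00)
    have tang: "real N * x powr (W / N) \<le> (\<Sum>i<N. x powr real (card (S i)))"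
      unfolding W using tangent_sum[OF x0, of N "\<lambda>i. real (card (S i))"] N by simp
    also have "\<dots> = (\<Sum>i<N. x ^ card (S i))" using x0 by (simp add: powr_realpow)
    finally have key: "real N * x powr (W / N) \<le> (1 + x) ^ M" using sumbound by linarith
    have "ln (real N * x powr (W / N)) \<le> ln ((1 + x) ^ M)"
      using key N0 x0 by (subst ln_le_cancel_iff) auto
    hence "ln (real N) + W / N * ln x \<le> real M * ln (1 + x)"
      using N0 x0 by (simp add: ln_mult ln_powr ln_realpow)
    moreover have "real M * ln (1 + x) \<le> real M * x"
      using x0 by (intro mult_left_mono ln_add_one_self_le_self) auto
    moreover have "real M * x \<le> ln (real N) / 2 + 1"
    proof -
      have "real M * x \<le> (T * log 2 (real N) + 1) * x" using Mle x0 by (intro mult_right_mono) auto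
      also have "\<dots> = ln (real N) / 2 + x" using T0 ln2 by (simp add: x_def log2 field_simps)
      finally show ?thesis using x1 by simp
    qed
    ultimately have "W / N * L \<ge> ln (real N) / 4" using lnN by (simp add: L_def)
    hence "W * L \<ge> real N * ln (real N) / 4" using N0 by (simp add: field_simps)
    hence low: "ln 2 / (4*L) * real N * log 2 (real N) \<le> W"
      using L0 ln2 by (simp add: log2 field_simps)
    show "ln 2 / (4*L) * real N * log 2 (real N) \<le> real (l00_cost (num_meas T N) N A) \<and>
             real (l00_cost (num_meas T N) N A) \<le> (2*T) * real N * log 2 (real N)"
      using low up by (simp add: W_def M_def)
  qed
  show ?thesis
    apply (rule exI[of _ "ln 2 / (4*L)"])
    apply (intro conjI)
    subgoal using L0 ln2 by simp
    apply (rule exI[of _ "2*T"])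
    apply (intro conjI)
    subgoal using T0 by simp
    apply (rule exI[of _ 81])
    using main by blast
qed

end
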